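(* Let $N_o>0$, $\alpha>2$ and $\eta(d)=\frac{1}{(1+d)^\alpha}$. (a) Given $C,D>0$ and a positive integer $m$, there exist $t,r\in\mathbb{R}^2$ and a set $T\subset\mathbb{R}^2$ with $m$ elements such that $(t,r,T)$ satisfies DC$(C,D)$ and, for every $P>0$, $$\mathrm{SINR}(t,r,T,P,N_o,\eta)\le\frac17\Big(\frac{1+2C(2+D)}{1+C}\Big)^\alpha\Big(\sum_{k=1}^{\lfloor\sqrt{m/7}-2\rfloor}\frac{1}{k^{\alpha-1}}\Big)^{-1}.$$ (b) If $\beta>0$ and $\frac17\Big(\frac{1+2C(2+D)}{1+C}\Big)^\alpha\Big(\sum_{k=1}^\infty\frac{1}{k^{\alpha-1}}\Big)^{-1}<\beta$, then $(C,D)$ does not ensure SINR$_\beta$; i.e., there exists $(t,r,T)$ satisfying DC$(C,D)$ such that for all $P>0$, $\mathrm{SINR}(t,r,T,P,N_o,\eta)<\beta$. (c) If $\beta>0$ and $\frac17\Big(\sum_{k=1}^\infty\frac{1}{k^{\alpha-1}}\Big)^{-1}<\beta$, then all sufficiently small $C,D>0$ do not ensure SINR$_\beta$.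
   Context: $\mathrm{SINR}(t,r,T,P,N_o,\eta)=\dfrac{P\eta(\|t-r\|)}{N_o+\sum_{t'\in T}P\eta(\|t'-r\|)}$ for $t,r\in\mathbb{R}^2$, $T$ a finite subset of $\mathbb{R}^2$, $P>0$. $(t,r,T)$ satisfies DC$(C,D)$ if $\|t-r\|\le C$ and $\|t'-t''\|\ge C(2+D)$ for all distinct $t',t''\in T\cup\{t\}$. The pair $(C,D)$ ensures SINR$_\beta$ if there exists $P>0$ such that every triple $(t,r,T)$ satisfying DC$(C,D)$ has $\mathrm{SINR}\ge\beta$. *)

theory Defs
  imports "HOL-Analysis.Analysis"
begin

type_synonym point = "real ^ 2"

definition eta :: "real \<Rightarrow> real \<Rightarrow> real" where
  "eta \<alpha> d = 1 / (1 + d) powr \<alpha>"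

definition SINR :: "point \<Rightarrow> point \<Rightarrow> point set \<Rightarrow> real \<Rightarrow> real \<Rightarrow> (real \<Rightarrow> real) \<Rightarrow> real" where
  "SINR t r T P No \<eta> =
     P * \<eta> (norm (t - r)) / (No + (\<Sum>t'\<in>T. P * \<eta> (norm (t' - r))))"

definition DC :: "real \<Rightarrow> real \<Rightarrow> point \<Rightarrow> point \<Rightarrow> point set \<Rightarrow> bool" where
  "DC C D t r T \<longleftrightarrow> norm (t - r) \<le> C \<and>
     (\<forall>t'\<in>T \<union> {t}. \<forall>t''\<in>T \<union> {t}. t' \<noteq> t'' \<longrightarrow> norm (t' - t'') \<ge> C * (2 + D))"

definition ensures_SINR :: "real \<Rightarrow> real \<Rightarrow> (real \<Rightarrow> real) \<Rightarrow> real \<Rightarrow> real \<Rightarrow> bool" where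
  "ensures_SINR \<beta> No \<eta> C D \<longleftrightarrow>
     (\<exists>P>0. \<forall>t r T. finite T \<longrightarrow> DC C D t r T \<longrightarrow> SINR t r T P No \<eta> \<ge> \<beta>)"

end

theory Submission
  imports Defs
begin



lemma norm_v2: "norm (vector [x, y] :: real^2) = sqrt (x^2 + y^2)"
  unfolding norm_vec_def L2_set_def sum_2 by simp

lemma vec2_minus: "(vector [a, b] :: real^2) - vector [c, d] = vector [a - c, b - d]"
  by (simp add: vec_eq_iff forall_2)

definition gp :: "real \<Rightarrow> int \<times> int \<Rightarrow> point" where
  "gp L p = vector [L * of_int (fst p), L * of_int (snd p)]"

definition gbox :: "nat \<Rightarrow> (int \<times> int) set" where
  "gbox K = {-int K..int K} \<times> {-int K..int K}"

lemma finite_gbox: "finite (gbox K)" by (simp add: gbox_def)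

lemma card_gbox: "card (gbox K) = (2*K+1)^2"
proof -
  have "nat (int K + 1 + int K) = 2*K+1" by simp
  then show ?thesis unfolding gbox_def card_cartesian_product by (simp add: power2_eq_square)
qed

lemma gbox_mono: "K \<le> K' \<Longrightarrow> gbox K \<subseteq> gbox K'"
  by (auto simp: gbox_def)

lemma gbox0: "gbox 0 = {(0,0)}" by (auto simp: gbox_def)

lemma gp_sep:
  assumes "L > 0" "p \<noteq> q"
  shows "norm (gp L p - gp L q) \<ge> L"
proof -
  obtain a b c d where pq: "p = (a,b)" "q = (c,d)" by (cases p, cases q) auto
  have "a \<noteq> c \<or> b \<noteq> d" using assms pq by auto
  then have "\<bar>a - c\<bar> \<ge> 1 \<or> \<bar>b - d\<bar> \<ge> 1" by auto
  then have "\<bar>real_of_int a - c\<bar> \<ge> 1 \<or> \<bar>real_of_int b - d\<bar> \<ge> 1"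
    by (metis of_int_1_le_iff of_int_abs of_int_diff)
  then have "L * \<bar>real_of_int a - c\<bar> \<ge> L \<or> L * \<bar>real_of_int b - d\<bar> \<ge> L"
    using assms(1) by (metis mult.right_neutral mult_left_mono less_imp_le)
  moreover have "\<bar>(gp L p - gp L q) $ 1\<bar> = L * \<bar>real_of_int a - c\<bar>"
    "\<bar>(gp L p - gp L q) $ 2\<bar> = L * \<bar>real_of_int b - d\<bar>"
    using assms(1) by (simp_all add: gp_def pq abs_mult right_diff_distrib[symmetric])
  ultimately show ?thesis using component_le_norm_cart[of "gp L p - gp L q"] by smt
qed

lemma gp_inj: "L > 0 \<Longrightarrow> inj (gp L)"
  by (metis gp_sep inj_on_def norm_zero not_le diff_self)

lemma ring_nrm:
  assumes "p \<in> gbox (Suc K) - gbox K"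
  shows "nat (max \<bar>fst p\<bar> \<bar>snd p\<bar>) = Suc K" "p \<noteq> (0,0)"
  using assms by (auto simp: gbox_def)

lemma card_ring: "card (gbox (Suc K) - gbox K) = 8 * Suc K"
proof -
  have "card (gbox (Suc K) - gbox K) = card (gbox (Suc K)) - card (gbox K)"
    by (rule card_Diff_subset) (auto simp: finite_gbox gbox_mono)
  also have "\<dots> = 8 * Suc K" unfolding card_gbox by (simp add: power2_eq_square algebra_simps)
  finally show ?thesis .
qed

lemma ring_sum:
  fixes f :: "int \<times> int \<Rightarrow> real" and c :: "nat \<Rightarrow> real"
  assumes "\<And>p. p \<noteq> (0,0) \<Longrightarrow> f p \<ge> c (nat (max \<bar>fst p\<bar> \<bar>snd p\<bar>))"
  shows "(\<Sum>p\<in>gbox K - {(0,0)}. f p) \<ge> (\<Sum>k=1..K. real (8*k) * c k)"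
proof (induction K)
  case 0
  then show ?case by (simp add: gbox0)
next
  case (Suc K)
  have eq: "gbox (Suc K) - {(0,0)} = (gbox K - {(0,0)}) \<union> (gbox (Suc K) - gbox K)"
    using gbox_mono[of K "Suc K"] by (auto simp: gbox_def)
  have "(\<Sum>p\<in>gbox (Suc K) - {(0,0)}. f p) = (\<Sum>p\<in>gbox K - {(0,0)}. f p) + (\<Sum>p\<in>gbox (Suc K) - gbox K. f p)"
    unfolding eq by (rule sum.union_disjoint) (auto simp: finite_gbox)
  moreover have "(\<Sum>p\<in>gbox (Suc K) - gbox K. f p) \<ge> (\<Sum>p\<in>gbox (Suc K) - gbox K. c (Suc K))"
    by (rule sum_mono) (metis assms ring_nrm)
  moreover have "(\<Sum>p\<in>gbox (Suc K) - gbox K. c (Suc K)) = real (8 * Suc K) * c (Suc K)"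
    by (simp add: card_ring)
  ultimately show ?case using Suc.IH by (simp add: card_ring)
qed

lemma gp_norm_bound:
  assumes "L > 0" "p \<noteq> (0,0)"
  shows "norm (gp L p) \<le> 3/2 * real (nat (max \<bar>fst p\<bar> \<bar>snd p\<bar>)) * L"
proof -
  obtain i j where p: "p = (i,j)" by (cases p)
  define k where "k = max \<bar>i\<bar> \<bar>j\<bar>"
  have k0: "k \<ge> 0" by (simp add: k_def)
  have rk: "real (nat k) = real_of_int k" using k0 by simp
  have "real_of_int i ^ 2 \<le> real_of_int k ^ 2" "real_of_int j ^ 2 \<le> real_of_int k ^ 2"
    unfolding k_def by (simp_all add: abs_le_square_iff[symmetric] del: of_int_abs)
  then have "(L * real_of_int i)^2 + (L * real_of_int j)^2 \<le> (3/2 * real_of_int k * L)^2"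
  proof -
    have "(L * real_of_int i)^2 + (L * real_of_int j)^2 = L^2 * (real_of_int i ^ 2 + real_of_int j ^ 2)"
      by (simp add: power_mult_distrib algebra_simps)
    also have "\<dots> \<le> L^2 * (2 * real_of_int k ^ 2)"
      by (rule mult_left_mono) (use \<open>real_of_int i ^ 2 \<le> _\<close> \<open>real_of_int j ^ 2 \<le> _\<close> in auto)
    also have "\<dots> \<le> (3/2 * real_of_int k * L)^2"
    proof -
      have "0 \<le> L^2 * real_of_int k ^ 2" by simp
      moreover have "(3/2 * real_of_int k * L)^2 = 9/4 * (L^2 * real_of_int k ^ 2)"
        by (simp add: power2_eq_square)
      ultimately show ?thesis by linarith
    qed
    finally show ?thesis .
  qed
  then have "sqrt ((L * real_of_int i)^2 + (L * real_of_int j)^2) \<le> 3/2 * real_of_int k * L"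
  proof -
    have "0 \<le> 3/2 * real_of_int k * L" using k0 assms(1) by simp
    then show ?thesis using \<open>_ \<le> (3/2 * real_of_int k * L)^2\<close>
      by (metis real_sqrt_le_mono real_sqrt_abs abs_of_nonneg)
  qed
  then show ?thesis by (simp add: gp_def p norm_v2 k_def[symmetric] rk)
qed

lemma nrm_ge1: "p \<noteq> (0,0) \<Longrightarrow> real (nat (max \<bar>fst p\<bar> \<bar>snd p\<bar>)) \<ge> 1"
  by (cases p) auto

lemma weight:
  assumes "C > 0" "D > 0" "\<alpha> > 0" "p \<noteq> (0,0)"
  shows "eta \<alpha> (norm (gp (C*(2+D)) p - vector [C,0])) \<ge>
           1 / (real (nat (max \<bar>fst p\<bar> \<bar>snd p\<bar>)) * (1 + 2*(C*(2+D)))) powr \<alpha>"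
proof -
  define L where "L = C*(2+D)"
  define k where "k = real (nat (max \<bar>fst p\<bar> \<bar>snd p\<bar>))"
  have L: "L > 0" "C \<le> L/2" using assms by (auto simp: L_def algebra_simps add_pos_pos)
  have k: "k \<ge> 1" using nrm_ge1[OF assms(4)] by (simp add: k_def)
  define d where "d = norm (gp L p - vector [C,0])"
  have nr: "norm (vector [C,0] :: real^2) = C" using assms(1) by (simp add: norm_v2)
  have "d \<le> norm (gp L p) + C" unfolding d_def using norm_triangle_ineq4[of "gp L p" "vector [C,0]"] nr by simp
  also have "\<dots> \<le> 3/2 * k * L + C" using gp_norm_bound[OF L(1) assms(4)] by (simp add: k_def)
  finally have d1: "1 + d \<le> k * (1 + 2*L)"
  proof -
    assume "d \<le> 3/2 * k * L + C"
    moreover have "L \<le> k * L" using k L by simp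
    moreover have "k * (1 + 2*L) = k + 2 * (k * L)" by (simp add: algebra_simps)
    ultimately show ?thesis using k L by linarith
  qed
  have d0: "0 \<le> d" by (simp add: d_def)
  have "(1 + d) powr \<alpha> \<le> (k * (1 + 2*L)) powr \<alpha>"
    by (rule powr_mono2) (use d0 d1 assms in auto)
  moreover have "(1 + d) powr \<alpha> > 0" using d0 by simp
  ultimately have "1 / (k * (1 + 2*L)) powr \<alpha> \<le> 1 / (1 + d) powr \<alpha>"
    by (simp add: frac_le)
  then show ?thesis by (simp add: eta_def d_def L_def k_def)
qed

lemma gp0: "gp L (0,0) = 0" by (simp add: gp_def vec_eq_iff forall_2)

lemma config_DC:
  assumes "C > 0" "D > 0" "finite G"
  shows "finite (gp (C*(2+D)) ` G) \<and> card (gp (C*(2+D)) ` G) = card G \<and>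
         DC C D (gp (C*(2+D)) (0,0)) (vector [C,0]) (gp (C*(2+D)) ` G)"
proof -
  define L where "L = C*(2+D)"
  have L: "L > 0" using assms by (simp add: L_def add_pos_pos)
  have "card (gp L ` G) = card G" using gp_inj[OF L] by (simp add: card_image inj_on_subset)
  moreover have "norm (gp L (0,0) - vector [C,0]) \<le> C"
    using assms(1) by (simp add: gp0 norm_minus_commute norm_v2)
  moreover have "\<forall>t'\<in>gp L ` G \<union> {gp L (0,0)}. \<forall>t''\<in>gp L ` G \<union> {gp L (0,0)}.
      t' \<noteq> t'' \<longrightarrow> norm (t' - t'') \<ge> C * (2 + D)"
  proof (intro ballI impI)
    fix x y assume "x \<in> gp L ` G \<union> {gp L (0,0)}" "y \<in> gp L ` G \<union> {gp L (0,0)}" "x \<noteq> y"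
    then obtain a b where "x = gp L a" "y = gp L b" "a \<noteq> b" by blast
    then show "norm (x - y) \<ge> C * (2 + D)" using gp_sep[OF L] by (simp add: L_def)
  qed
  ultimately show ?thesis using assms(3) by (simp add: DC_def L_def)
qed

lemma powr_split:
  fixes k M \<alpha> :: real
  assumes "k \<ge> 1" "M > 0"
  shows "k * (1 / (k * M) powr \<alpha>) = 1 / M powr \<alpha> * (1 / k powr (\<alpha> - 1))"
proof -
  have "(k * M) powr \<alpha> = k powr \<alpha> * M powr \<alpha>" by (rule powr_mult)
  moreover have "k powr \<alpha> = k * k powr (\<alpha> - 1)"
    using assms by (simp add: powr_diff)
  ultimately show ?thesis using assms by (simp add: field_simps)
qed

lemma config_sinr:
  assumes "C > 0" "D > 0" "\<alpha> > 0" "No > 0" "finite G" "(0,0) \<notin> G"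
    "gbox K - {(0,0)} \<subseteq> G" "K \<ge> 1" "P > 0"
  shows "SINR (gp (C*(2+D)) (0,0)) (vector [C,0]) (gp (C*(2+D)) ` G) P No (eta \<alpha>)
     \<le> (1/8) * ((1 + 2 * C * (2 + D)) / (1 + C)) powr \<alpha> / (\<Sum>k = 1..K. 1 / real k powr (\<alpha> - 1))"
proof -
  define L where "L = C*(2+D)"
  have L: "L > 0" using assms by (simp add: L_def add_pos_pos)
  define r :: point where "r = vector [C,0]"
  define w where "w p = eta \<alpha> (norm (gp L p - r))" for p
  define S where "S = (\<Sum>k = 1..K. 1 / real k powr (\<alpha> - 1))"
  define M where "M = 1 + 2*L"
  have M: "M > 0" using L by (simp add: M_def)
  have w0: "w p \<ge> 0" for p by (simp add: w_def eta_def)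
  have S: "S > 0" unfolding S_def using assms(8)
    by (intro sum_pos) auto
  have "(\<Sum>p\<in>G. w p) \<ge> (\<Sum>p\<in>gbox K - {(0,0)}. w p)"
    by (rule sum_mono2) (use assms w0 in auto)
  moreover have "(\<Sum>p\<in>gbox K - {(0,0)}. w p) \<ge> (\<Sum>k=1..K. real (8*k) * (1 / (real k * M) powr \<alpha>))"
    by (rule ring_sum) (use weight[OF assms(1-3)] in \<open>simp add: w_def r_def L_def M_def\<close>)
  moreover have "(\<Sum>k=1..K. real (8*k) * (1 / (real k * M) powr \<alpha>)) = 8 / M powr \<alpha> * S"
    unfolding S_def sum_distrib_left
  proof (rule sum.cong)
    fix k assume "k \<in> {1..K}"
    then have "real k \<ge> 1" by simp
    then show "real (8*k) * (1 / (real k * M) powr \<alpha>) = 8 / M powr \<alpha> * (1 / real k powr (\<alpha> - 1))"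
      using powr_split[OF _ M, of "real k" \<alpha>] by simp
  qed simp
  ultimately have W: "(\<Sum>p\<in>G. w p) \<ge> 8 / M powr \<alpha> * S" by linarith
  have Wpos: "8 / M powr \<alpha> * S > 0" using S M by simp
  have eta0: "eta \<alpha> (norm (gp L (0,0) - r)) = 1 / (1 + C) powr \<alpha>"
    using assms(1) by (simp add: gp0 r_def norm_minus_commute norm_v2 eta_def)
  have sumT: "(\<Sum>t'\<in>gp L ` G. P * eta \<alpha> (norm (t' - r))) = P * (\<Sum>p\<in>G. w p)"
    by (simp add: sum.reindex inj_on_subset[OF gp_inj[OF L]] sum_distrib_left w_def)
  have "SINR (gp L (0,0)) r (gp L ` G) P No (eta \<alpha>) = P * (1 / (1 + C) powr \<alpha>) / (No + P * (\<Sum>p\<in>G. w p))"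
    unfolding SINR_def sumT eta0 ..
  also have "\<dots> \<le> P * (1 / (1 + C) powr \<alpha>) / (P * (8 / M powr \<alpha> * S))"
  proof (rule divide_left_mono)
    have "P * (8 / M powr \<alpha> * S) \<le> P * (\<Sum>p\<in>G. w p)"
      using W assms(9) by (intro mult_left_mono) auto
    then show "P * (8 / M powr \<alpha> * S) \<le> No + P * (\<Sum>p\<in>G. w p)" using assms(4) by linarith
    show "0 \<le> P * (1 / (1 + C) powr \<alpha>)" using assms by simp
    have "0 < P * (8 / M powr \<alpha> * S)" using Wpos assms(9) by (rule mult_pos_pos[rotated])
    moreover have "0 < No + P * (\<Sum>p\<in>G. w p)" using calculation \<open>P * _ \<le> No + _\<close> by linarith
    ultimately show "0 < (No + P * (\<Sum>p\<in>G. w p)) * (P * (8 / M powr \<alpha> * S))" by (rule mult_pos_pos[rotated])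
  qed
  also have "\<dots> = (1/8) * (M / (1 + C)) powr \<alpha> / S"
    using assms(1,9) M S by (simp add: powr_divide field_simps)
  finally show ?thesis by (simp add: L_def r_def M_def S_def algebra_simps)
qed

lemma summ:
  assumes "\<alpha> > 2"
  shows "summable (\<lambda>k. 1 / real (Suc k) powr (\<alpha> - 1))"
proof -
  have "summable (\<lambda>n. real n powr (1 - \<alpha>))" using assms by (simp add: summable_real_powr_iff)
  then have "summable (\<lambda>n. real (Suc n) powr (1 - \<alpha>))" by (subst summable_Suc_iff)
  moreover have "real (Suc n) powr (1 - \<alpha>) = 1 / real (Suc n) powr (\<alpha> - 1)" for n
    by (metis minus_diff_eq powr_minus_divide)
  ultimately show ?thesis by simp
qed

lemma coreB:
  assumes "C > 0" "D > 0" "\<alpha> > 2" "No > 0" "\<beta> > 0"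
    "(1/8) * ((1 + 2 * C * (2 + D)) / (1 + C)) powr \<alpha> / (\<Sum>k. 1 / real (Suc k) powr (\<alpha> - 1)) < \<beta>"
  shows "\<exists>t r :: point. \<exists>T :: point set. finite T \<and> DC C D t r T \<and>
         (\<forall>P > 0. SINR t r T P No (eta \<alpha>) < \<beta>)"
proof -
  define f where "f k = 1 / real (Suc k) powr (\<alpha> - 1)" for k
  define A where "A = ((1 + 2 * C * (2 + D)) / (1 + C)) powr \<alpha>"
  have sf: "summable f" unfolding f_def by (rule summ[OF assms(3)])
  have Z: "suminf f > 0" by (rule suminf_pos[OF sf]) (simp add: f_def)
  have "(\<Sum>k. 1 / real (Suc k) powr (\<alpha> - 1)) = suminf f" unfolding f_def ..
  then have "(1/8) * A / suminf f < \<beta>" using assms(6) by (simp add: A_def)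
  then have "A / 8 < \<beta> * suminf f" using Z by (simp add: pos_divide_less_eq)
  then have lt: "A / (8 * \<beta>) < suminf f" using assms(5) by (simp add: field_simps)
  have "\<forall>\<^sub>F n in sequentially. A / (8 * \<beta>) < (\<Sum>i<n. f i)"
    by (rule order_tendstoD(1)[OF summable_LIMSEQ[OF sf] lt])
  moreover have "\<forall>\<^sub>F n in sequentially. n \<ge> (1::nat)" by (rule eventually_ge_at_top)
  ultimately have "\<forall>\<^sub>F n in sequentially. A / (8 * \<beta>) < (\<Sum>i<n. f i) \<and> n \<ge> 1"
    by (rule eventually_conj)
  then obtain N where "\<forall>n\<ge>N. A / (8 * \<beta>) < (\<Sum>i<n. f i) \<and> n \<ge> 1"
    unfolding eventually_sequentially by blast
  then obtain K where K: "A / (8 * \<beta>) < (\<Sum>i<K. f i)" "K \<ge> 1" by blast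
  define S where "S = (\<Sum>k = 1..K. 1 / real k powr (\<alpha> - 1))"
  have "S = (\<Sum>i<K. f i)" unfolding S_def f_def by (simp add: sum.atLeast1_atMost_eq)
  with K have SK: "A / (8 * \<beta>) < S" by simp
  have A0: "A \<ge> 0" by (simp add: A_def)
  have "A/(8*\<beta>) \<ge> 0" using A0 assms(5) by simp
  then have Spos: "S > 0" using SK by linarith
  have "A < S * (8 * \<beta>)" using SK assms(5) by (simp add: pos_divide_less_eq)
  then have "(1/8) * A < \<beta> * S" by (simp add: algebra_simps)
  then have bnd: "(1/8) * A / S < \<beta>" using Spos by (simp add: pos_divide_less_eq)
  define G where "G = gbox K - {(0,0)}"
  have fin: "finite G" by (simp add: G_def finite_gbox)
  have "SINR (gp (C*(2+D)) (0,0)) (vector [C,0]) (gp (C*(2+D)) ` G) P No (eta \<alpha>) < \<beta>" if "P > 0" for P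
  proof -
    have "SINR (gp (C*(2+D)) (0,0)) (vector [C,0]) (gp (C*(2+D)) ` G) P No (eta \<alpha>) \<le> (1/8) * A / S"
      unfolding A_def S_def
      by (rule config_sinr[OF assms(1,2) _ assms(4) fin _ _ K(2) that]) (use assms(3) in \<open>auto simp: G_def\<close>)
    then show ?thesis using bnd by linarith
  qed
  then show ?thesis using config_DC[OF assms(1,2) fin] fin by blast
qed

lemma card_bound:
  assumes "m > 0" "K = nat \<lfloor>sqrt (real m / 7) - 2\<rfloor>"
  shows "card (gbox K - {(0,0)}) \<le> m"
proof -
  have c1: "card (gbox K - {(0,0)}) \<le> (2*K+1)^2"
    using card_mono[OF finite_gbox Diff_subset] card_gbox by metis
  have "(2*K+1)^2 \<le> m"
  proof (cases "K = 0")
    case True then show ?thesis using assms by simp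
  next
    case False
    define x where "x = sqrt (real m / 7) - 2"
    have "\<lfloor>x\<rfloor> \<ge> 1" using False assms(2) by (simp add: x_def)
    then have "real K = of_int \<lfloor>x\<rfloor>" using assms(2) by (simp add: x_def)
    also have "\<dots> \<le> x" by simp
    finally have "real K + 2 \<le> sqrt (real m / 7)" by (simp add: x_def)
    then have "(real K + 2)^2 \<le> (sqrt (real m / 7))^2"
      by (intro power_mono) auto
    then have "(real K + 2)^2 \<le> real m / 7" by simp
    moreover have "real ((2*K+1)^2) \<le> 7 * (real K + 2)^2"
      by (simp add: power2_eq_square algebra_simps)
    ultimately have "real ((2*K+1)^2) \<le> real m" by linarith
    then show ?thesis by (simp only: of_nat_le_iff)
  qed
  with c1 show ?thesis by linarith
qed

lemma partA:
  assumes "C > 0" "D > 0" "\<alpha> > 2" "No > 0" "m > 0"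
  shows "\<exists>t r :: point. \<exists>T :: point set. finite T \<and> card T = m \<and> DC C D t r T \<and>
         (\<forall>P > 0. let S = (\<Sum>k = 1..nat \<lfloor>sqrt (real m / 7) - 2\<rfloor>. 1 / real k powr (\<alpha> - 1)) in
            S > 0 \<longrightarrow>
            SINR t r T P No (eta \<alpha>) \<le> (1/7) * ((1 + 2 * C * (2 + D)) / (1 + C)) powr \<alpha> / S)"
proof -
  define K where "K = nat \<lfloor>sqrt (real m / 7) - 2\<rfloor>"
  define B where "B = gbox K - {(0,0)}"
  define E where "E = (\<lambda>n::nat. (int K + 1 + int n, 0::int)) ` {..< m - card B}"
  define G where "G = B \<union> E"
  have cB: "card B \<le> m" unfolding B_def by (rule card_bound[OF assms(5) K_def])
  have finB: "finite B" by (simp add: B_def finite_gbox)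
  have finE: "finite E" by (simp add: E_def)
  have fin: "finite G" using finB finE by (simp add: G_def)
  have disj: "B \<inter> E = {}" by (auto simp: B_def E_def gbox_def)
  have cE: "card E = m - card B" unfolding E_def by (subst card_image) (auto simp: inj_on_def)
  have cG: "card G = m" unfolding G_def using card_Un_disjoint[OF finB finE disj] cE cB by simp
  have n0: "(0,0) \<notin> G" by (auto simp: G_def B_def E_def)
  have sub: "gbox K - {(0,0)} \<subseteq> G" by (auto simp: G_def B_def)
  have "SINR (gp (C*(2+D)) (0,0)) (vector [C,0]) (gp (C*(2+D)) ` G) P No (eta \<alpha>) \<le>
          (1/7) * ((1 + 2 * C * (2 + D)) / (1 + C)) powr \<alpha> / S"
    if P: "P > 0" and S: "S = (\<Sum>k = 1..K. 1 / real k powr (\<alpha> - 1))" and Sp: "S > 0" for P S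
  proof -
    have "K \<ge> 1"
    proof (rule ccontr)
      assume "\<not> K \<ge> 1" then have "K = 0" by simp
      then show False using S Sp by simp
    qed
    then have "SINR (gp (C*(2+D)) (0,0)) (vector [C,0]) (gp (C*(2+D)) ` G) P No (eta \<alpha>) \<le>
          (1/8) * ((1 + 2 * C * (2 + D)) / (1 + C)) powr \<alpha> / S"
      unfolding S using config_sinr[OF assms(1,2) _ assms(4) fin n0 sub _ P] assms(3) by simp
    also have "\<dots> \<le> (1/7) * ((1 + 2 * C * (2 + D)) / (1 + C)) powr \<alpha> / S"
      using Sp by (intro divide_right_mono mult_right_mono) auto
    finally show ?thesis .
  qed
  then show ?thesis using config_DC[OF assms(1,2) fin] fin cG unfolding K_def Let_def
    by (metis (no_types, lifting))
qed

lemma notens: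
  assumes "finite T" "DC C D t r T" "\<forall>P > 0. SINR t r T P No \<eta> < \<beta>"
  shows "\<not> ensures_SINR \<beta> No \<eta> C D"
  using assms unfolding ensures_SINR_def by (meson not_le)

lemma Zpos: "\<alpha> > 2 \<Longrightarrow> (\<Sum>k. 1 / real (Suc k) powr (\<alpha> - 1)) > 0"
  by (rule suminf_pos[OF summ]) auto

lemma partB:
  assumes "C > 0" "D > 0" "\<alpha> > 2" "No > 0" "\<beta> > 0"
    "(1/7) * ((1 + 2 * C * (2 + D)) / (1 + C)) powr \<alpha> / (\<Sum>k. 1 / real (Suc k) powr (\<alpha> - 1)) < \<beta>"
  shows "\<not> ensures_SINR \<beta> No (eta \<alpha>) C D \<and> (\<exists>t r :: point. \<exists>T :: point set. finite T \<and> DC C D t r T \<and>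
         (\<forall>P > 0. SINR t r T P No (eta \<alpha>) < \<beta>))"
proof -
  have "(1/8) * ((1 + 2 * C * (2 + D)) / (1 + C)) powr \<alpha> / (\<Sum>k. 1 / real (Suc k) powr (\<alpha> - 1))
     \<le> (1/7) * ((1 + 2 * C * (2 + D)) / (1 + C)) powr \<alpha> / (\<Sum>k. 1 / real (Suc k) powr (\<alpha> - 1))"
    using Zpos[OF assms(3)] by (intro divide_right_mono mult_right_mono) auto
  then have "(1/8) * ((1 + 2 * C * (2 + D)) / (1 + C)) powr \<alpha> / (\<Sum>k. 1 / real (Suc k) powr (\<alpha> - 1)) < \<beta>"
    using assms(6) by linarith
  then have ex: "\<exists>t r :: point. \<exists>T :: point set. finite T \<and> DC C D t r T \<and>
         (\<forall>P > 0. SINR t r T P No (eta \<alpha>) < \<beta>)"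
    by (rule coreB[OF assms(1-5)])
  then show ?thesis using notens by blast
qed

lemma partC:
  assumes "\<alpha> > 2" "No > 0" "\<beta> > 0"
    "(1/7) / (\<Sum>k. 1 / real (Suc k) powr (\<alpha> - 1)) < \<beta>"
  shows "\<exists>\<epsilon> > 0. \<forall>C D :: real. 0 < C \<longrightarrow> C < \<epsilon> \<longrightarrow> 0 < D \<longrightarrow> D < \<epsilon> \<longrightarrow>
         \<not> ensures_SINR \<beta> No (eta \<alpha>) C D"
proof -
  define Z where "Z = (\<Sum>k. 1 / real (Suc k) powr (\<alpha> - 1))"
  have Z: "Z > 0" using Zpos[OF assms(1)] by (simp add: Z_def)
  define c where "c = (8/7::real) powr (1/\<alpha>)"
  have c1: "c > 1" unfolding c_def using assms(1) powr_less_mono[of 0 "1/\<alpha>" "8/7::real"] by simp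
  have cp: "c powr \<alpha> = 8/7" unfolding c_def using assms(1) by (simp add: powr_powr)
  define \<epsilon> where "\<epsilon> = min 1 ((c - 1) / 12)"
  have ep: "\<epsilon> > 0" using c1 by (simp add: \<epsilon>_def)
  have "\<not> ensures_SINR \<beta> No (eta \<alpha>) C D" if C: "0 < C" "C < \<epsilon>" and D: "0 < D" "D < \<epsilon>" for C D
  proof -
    define b where "b = (1 + 2 * C * (2 + D)) / (1 + C)"
    have "2 * C * (2 + D) \<le> 2 * C * 3" using C D by (intro mult_left_mono) (auto simp: \<epsilon>_def)
    moreover have "(1 + 2 * C * (2 + D)) / (1 + C) \<le> 1 + 2 * C * (2 + D)"
    proof -
      have x0: "0 \<le> 1 + 2 * C * (2 + D)" using C D by simp
      have "(1 + 2 * C * (2 + D)) * 1 \<le> (1 + 2 * C * (2 + D)) * (1 + C)"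
        using C x0 by (intro mult_left_mono) auto
      then show ?thesis using C by (simp add: divide_le_eq)
    qed
    ultimately have b1: "b \<le> 1 + 6 * C" unfolding b_def by linarith
    have "6 * C < (c - 1) / 2" using C by (simp add: \<epsilon>_def)
    then have h1: "1 + 6 * C < c" using c1 by (simp add: field_simps)
    have bc: "b < c" using b1 h1 by linarith
    have b0: "b \<ge> 0" unfolding b_def using C D by simp
    have "b powr \<alpha> < c powr \<alpha>" by (rule powr_less_mono2) (use assms b0 bc in auto)
    then have "b powr \<alpha> < 8/7" using cp by simp
    then have "(1/8) * b powr \<alpha> < 1/7" by simp
    then have "(1/8) * b powr \<alpha> / Z < (1/7) / Z" by (rule divide_strict_right_mono[OF _ Z])
    then have "(1/8) * b powr \<alpha> / Z < \<beta>" using assms(4) by (simp add: Z_def)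
    then show ?thesis using coreB[OF C(1) D(1) assms(1,2,3)] notens unfolding b_def Z_def by blast
  qed
  then show ?thesis using ep by blast
qed


theorem lemma3:
  fixes No \<alpha> :: real
  assumes "No > 0" and "\<alpha> > 2"
  shows
   "(\<forall>C D :: real. \<forall>m :: nat. C > 0 \<longrightarrow> D > 0 \<longrightarrow> m > 0 \<longrightarrow>
      (\<exists>t r :: point. \<exists>T :: point set. finite T \<and> card T = m \<and> DC C D t r T \<and>
         (\<forall>P > 0. let S = (\<Sum>k = 1..nat \<lfloor>sqrt (real m / 7) - 2\<rfloor>. 1 / real k powr (\<alpha> - 1)) in
            S > 0 \<longrightarrow>
            SINR t r T P No (eta \<alpha>) \<le> (1/7) * ((1 + 2 * C * (2 + D)) / (1 + C)) powr \<alpha> / S)))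
    \<and>
    (\<forall>\<beta> C D :: real. \<beta> > 0 \<longrightarrow> C > 0 \<longrightarrow> D > 0 \<longrightarrow>
      (1/7) * ((1 + 2 * C * (2 + D)) / (1 + C)) powr \<alpha>
         / (\<Sum>k. 1 / real (Suc k) powr (\<alpha> - 1)) < \<beta> \<longrightarrow>
      \<not> ensures_SINR \<beta> No (eta \<alpha>) C D \<and>
      (\<exists>t r :: point. \<exists>T :: point set. finite T \<and> DC C D t r T \<and>
         (\<forall>P > 0. SINR t r T P No (eta \<alpha>) < \<beta>)))
    \<and>
    (\<forall>\<beta> :: real. \<beta> > 0 \<longrightarrow>
      (1/7) / (\<Sum>k. 1 / real (Suc k) powr (\<alpha> - 1)) < \<beta> \<longrightarrow>
      (\<exists>\<epsilon> > 0. \<forall>C D :: real. 0 < C \<longrightarrow> C < \<epsilon> \<longrightarrow> 0 < D \<longrightarrow> D < \<epsilon> \<longrightarrow>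
         \<not> ensures_SINR \<beta> No (eta \<alpha>) C D))"
proof (intro conjI allI impI)
  fix C D :: real and m :: nat
  assume "C > 0" "D > 0" "m > 0"
  then show "\<exists>t r :: point. \<exists>T :: point set. finite T \<and> card T = m \<and> DC C D t r T \<and>
         (\<forall>P > 0. let S = (\<Sum>k = 1..nat \<lfloor>sqrt (real m / 7) - 2\<rfloor>. 1 / real k powr (\<alpha> - 1)) in
            S > 0 \<longrightarrow>
            SINR t r T P No (eta \<alpha>) \<le> (1/7) * ((1 + 2 * C * (2 + D)) / (1 + C)) powr \<alpha> / S)"
    by (intro partA assms)
next
  fix \<beta> C D :: real
  assume h: "\<beta> > 0" "C > 0" "D > 0"
    "(1/7) * ((1 + 2 * C * (2 + D)) / (1 + C)) powr \<alpha> / (\<Sum>k. 1 / real (Suc k) powr (\<alpha> - 1)) < \<beta>"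
  note pb = partB[OF h(2,3) assms(2,1) h(1,4)]
  show "\<not> ensures_SINR \<beta> No (eta \<alpha>) C D" using pb by (rule conjunct1)
  show "\<exists>t r :: point. \<exists>T :: point set. finite T \<and> DC C D t r T \<and>
         (\<forall>P > 0. SINR t r T P No (eta \<alpha>) < \<beta>)" using pb by (rule conjunct2)
next
  fix \<beta> :: real
  assume "\<beta> > 0" "(1/7) / (\<Sum>k. 1 / real (Suc k) powr (\<alpha> - 1)) < \<beta>"
  then show "\<exists>\<epsilon> > 0. \<forall>C D :: real. 0 < C \<longrightarrow> C < \<epsilon> \<longrightarrow> 0 < D \<longrightarrow> D < \<epsilon> \<longrightarrow>
         \<not> ensures_SINR \<beta> No (eta \<alpha>) C D"
    by (intro partC assms)
qed

end
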